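(* Let $G$ be the line graph of some graph, where $G$ has arbitrary infinite order. Then for every assignment of lists of size $2$ to the vertices of $G$, $G$ admits a majority vertex-coloring from these lists.
   Context: Given lists $L(x)$ for the vertices $x$ of $G$, a vertex-coloring from the lists is a map $c$ with $c(x)\in L(x)$ for each vertex $x$. It is a majority vertex-coloring if for every vertex $x$, the cardinality of the set of neighbors of $x$ having color $c(x)$ is at most the cardinality of the set of neighbors of $x$ having a color different from $c(x)$. *)

theory Defs
  imports Main
begin

text \<open>A simple graph H (possibly infinite) is given by its edge set E, a set of
  2-element subsets of the vertex type.\<close>

definition simple_edges :: "'a set set \<Rightarrow> bool" where
  "simple_edges E \<longleftrightarrow> (\<forall>e\<in>E. card e = 2)"

definition line_adj :: "'a set set \<Rightarrow> 'a set \<Rightarrow> 'a set \<Rightarrow> bool" where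
  "line_adj E e f \<longleftrightarrow> e \<in> E \<and> f \<in> E \<and> e \<noteq> f \<and> e \<inter> f \<noteq> {}"

definition nbhd :: "'v set \<Rightarrow> ('v \<Rightarrow> 'v \<Rightarrow> bool) \<Rightarrow> 'v \<Rightarrow> 'v set" where
  "nbhd V adj x = {y \<in> V. adj x y}"

definition card_leq :: "'a set \<Rightarrow> 'a set \<Rightarrow> bool" where
  "card_leq A B \<longleftrightarrow> (\<exists>f. inj_on f A \<and> f ` A \<subseteq> B)"

definition majority_list_coloring ::
  "'v set \<Rightarrow> ('v \<Rightarrow> 'v \<Rightarrow> bool) \<Rightarrow> ('v \<Rightarrow> 'c set) \<Rightarrow> ('v \<Rightarrow> 'c) \<Rightarrow> bool" where
  "majority_list_coloring V adj L c \<longleftrightarrow>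
     (\<forall>x\<in>V. c x \<in> L x) \<and>
     (\<forall>x\<in>V. card_leq {y \<in> nbhd V adj x. c y = c x} {y \<in> nbhd V adj x. c y \<noteq> c x})"

end

theory Submission
  imports Defs "HOL-Library.Equipollence" "HOL-Analysis.Function_Topology"
begin

unbundle cardinal_syntax

lemma card_leq_iff_lepoll: "card_leq A B \<longleftrightarrow> A \<lesssim> B"
  by (simp add: card_leq_def lepoll_def)

lemma lepoll_total: "A \<lesssim> B \<or> B \<lesssim> A"
proof -
  have "|A| \<le>o |B| \<or> |B| \<le>o |A|"
    by (rule ordLeq_total) (simp_all add: card_of_Well_order)
  thus ?thesis unfolding lepoll_def card_of_ordLeq[symmetric] by blast
qed

lemma Un_lepoll_infinite:
  assumes "infinite A" "B \<lesssim> A" shows "A \<union> B \<lesssim> A"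
proof -
  have "|B| \<le>o |A|" using assms(2) unfolding lepoll_def card_of_ordLeq[symmetric] by blast
  moreover have "|A| \<le>o |A|" by (simp add: card_of_refl ordIso_imp_ordLeq)
  ultimately have "|A \<union> B| \<le>o |A|"
    using card_of_Un_ordLeq_infinite_Field[of "|A|" A B] assms(1)
    by (simp add: Field_card_of card_of_card_order_on)
  thus ?thesis unfolding lepoll_def card_of_ordLeq[symmetric] by blast
qed

lemma times_nat_bij:
  assumes "infinite A" shows "\<exists>h. bij_betw h A (A \<times> (UNIV::nat set))"
proof -
  have "|UNIV::nat set| \<le>o |A|" using assms infinite_iff_card_of_nat by blast
  hence "|A \<times> (UNIV::nat set)| =o |A|" using card_of_Times_infinite[of A "UNIV::nat set"] assms by auto
  hence "|A| =o |A \<times> (UNIV::nat set)|" by (rule ordIso_symmetric)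
  thus ?thesis using card_of_ordIso by blast
qed



primrec seqp :: "(nat \<Rightarrow> 'e list \<Rightarrow> 'e list) \<Rightarrow> nat \<Rightarrow> 'e list" where
  "seqp F 0 = []"
| "seqp F (Suc k) = seqp F k @ F k (seqp F k)"

lemma card2_other: "card X = 2 \<Longrightarrow> \<exists>c\<in>X. c \<noteq> x"
  by (metis card_2_iff insertI1 insert_commute)

lemma csl:
  fixes Bs :: "'e set set" and L :: "'e \<Rightarrow> 'c set"
  assumes cB: "countable Bs" and inf: "\<And>B. B \<in> Bs \<Longrightarrow> infinite B"
    and L2: "\<And>e. e \<in> \<Union>Bs \<Longrightarrow> card (L e) = 2"
  shows "\<exists>col. (\<forall>e\<in>\<Union>Bs. col e \<in> L e) \<and> (\<forall>B\<in>Bs. \<forall>c. infinite {f\<in>B. col f \<noteq> c})"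
proof (cases "Bs = {}")
  case True then show ?thesis by auto
next
  case False
  let ?Q = "Bs \<times> (UNIV::nat set)"
  define q where "q = from_nat_into ?Q"
  have rq: "range q = ?Q" unfolding q_def
    by (rule range_from_nat_into) (use False cB in auto)
  define Bk where "Bk k = fst (q k)" for k
  have Bk: "Bk k \<in> Bs" for k using rq unfolding Bk_def by (metis SigmaE fst_conv rangeI)
  define a where "a xs k = (SOME e. e \<in> Bk k \<and> e \<notin> set xs)" for xs k
  define b where "b xs k = (SOME e. e \<in> Bk k \<and> e \<notin> set xs \<and> e \<noteq> a xs k)" for xs k
  define sq where "sq = seqp (\<lambda>k xs. [a xs k, b xs k])"
  define A where "A k = a (sq k) k" for k
  define Bb where "Bb k = b (sq k) k" for k
  have sqS: "sq (Suc k) = sq k @ [A k, Bb k]" for k by (simp add: sq_def A_def Bb_def)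
  have exn: "\<exists>e. e \<in> Bk k \<and> e \<notin> set xs \<and> e \<noteq> z" for k xs z
  proof -
    have "infinite (Bk k - (set xs \<union> {z}))" using inf[OF Bk[of k]] by auto
    then obtain e where "e \<in> Bk k - (set xs \<union> {z})" using infinite_imp_nonempty by blast
    thus ?thesis by auto
  qed
  have hA: "A k \<in> Bk k \<and> A k \<notin> set (sq k)" for k
    unfolding A_def a_def by (rule someI_ex) (use exn in blast)
  have hB: "Bb k \<in> Bk k \<and> Bb k \<notin> set (sq k) \<and> Bb k \<noteq> A k" for k
    unfolding Bb_def b_def A_def by (rule someI_ex) (use exn in blast)
  have mono: "j < k \<Longrightarrow> A j \<in> set (sq k) \<and> Bb j \<in> set (sq k)" for j k
  proof (induction k)
    case 0 then show ?case by simp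
  next
    case (Suc k) then show ?case by (cases "j = k") (auto simp: sqS)
  qed
  have dAA: "A j = A k \<Longrightarrow> j = k" for j k
    using mono hA by (metis linorder_neqE_nat)
  have dBB: "Bb j = Bb k \<Longrightarrow> j = k" for j k
    using mono hB by (metis linorder_neqE_nat)
  have dAB: "A j \<noteq> Bb k" for j k
    using mono hA hB by (metis linorder_neqE_nat)
  have injB: "inj Bb" using dBB by (auto simp: inj_def)
  define \<alpha> where "\<alpha> e = (SOME c. c \<in> L e)" for e
  define col where "col e = (if e \<in> range Bb then (SOME c. c \<in> L e \<and> c \<noteq> \<alpha> (A (inv Bb e))) else \<alpha> e)" for e
  have inU: "A k \<in> \<Union>Bs" "Bb k \<in> \<Union>Bs" for k using hA hB Bk by blast+
  have colA: "col (A k) = \<alpha> (A k)" for k using dAB unfolding col_def by auto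
  have colB: "col (Bb k) \<in> L (Bb k) \<and> col (Bb k) \<noteq> \<alpha> (A k)" for k
  proof -
    have "col (Bb k) = (SOME c. c \<in> L (Bb k) \<and> c \<noteq> \<alpha> (A k))"
      unfolding col_def using injB by simp
    moreover have "\<exists>c. c \<in> L (Bb k) \<and> c \<noteq> \<alpha> (A k)"
      using card2_other[OF L2[OF inU(2)]] by blast
    ultimately show ?thesis by (metis (mono_tags, lifting) someI_ex)
  qed
  have colL: "\<forall>e\<in>\<Union>Bs. col e \<in> L e"
  proof
    fix e assume e: "e \<in> \<Union>Bs"
    show "col e \<in> L e"
    proof (cases "e \<in> range Bb")
      case True then show ?thesis using colB by auto
    next
      case False
      have "L e \<noteq> {}" using L2[OF e] by auto
      then show ?thesis using False unfolding col_def \<alpha>_def by (simp add: some_in_eq)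
    qed
  qed
  have colAB: "col (A k) \<noteq> col (Bb k)" for k using colA colB by metis
  have infB: "infinite {f\<in>B. col f \<noteq> c}" if B: "B \<in> Bs" for B c
  proof -
    define K where "K = {k. Bk k = B}"
    have "{B} \<times> (UNIV::nat set) \<subseteq> q ` K"
    proof
      fix p assume "p \<in> {B} \<times> (UNIV::nat set)"
      then have "p \<in> range q" using rq B by auto
      then obtain k where "p = q k" by auto
      moreover have "Bk k = B" using \<open>p = q k\<close> \<open>p \<in> {B} \<times> UNIV\<close> unfolding Bk_def by auto
      ultimately show "p \<in> q ` K" unfolding K_def by blast
    qed
    moreover have "infinite ({B} \<times> (UNIV::nat set))"
      by (simp add: finite_cartesian_product_iff)
    ultimately have infK: "infinite K" by (meson finite_imageI finite_subset)
    define g where "g k = (if col (A k) \<noteq> c then A k else Bb k)" for k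
    have "inj_on g K" unfolding inj_on_def g_def using dAA dBB dAB by (auto split: if_splits) (metis)+
    hence "infinite (g ` K)" using infK finite_imageD by blast
    moreover have "g ` K \<subseteq> {f\<in>B. col f \<noteq> c}"
      unfolding g_def K_def using hA hB colAB by (auto simp: eq_commute[of "col (Bb _)"])
    ultimately show ?thesis using infinite_super by blast
  qed
  show ?thesis using colL infB by blast
qed



definition star :: "'a set set \<Rightarrow> 'a \<Rightarrow> 'a set set" where
  "star E x = {e \<in> E. x \<in> e}"
definition big :: "'a set set \<Rightarrow> 'a \<Rightarrow> bool" where
  "big E x \<longleftrightarrow> infinite (star E x)"
definition hx :: "'a set set \<Rightarrow> 'a \<Rightarrow> 'a set \<Rightarrow> 'a set \<times> nat" where
  "hx E x = (SOME h. bij_betw h (star E x) (star E x \<times> (UNIV::nat set)))"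
definition blk :: "'a set set \<Rightarrow> 'a \<Rightarrow> 'a set \<Rightarrow> 'a set set" where
  "blk E x f = {g \<in> star E x. fst (hx E x g) = fst (hx E x f)}"
definition Rel :: "'a set set \<Rightarrow> ('a set \<times> 'a set) set" where
  "Rel E = {(f,g). \<exists>x. big E x \<and> f \<in> star E x \<and> g \<in> blk E x f}"
definition cls :: "'a set set \<Rightarrow> 'a set \<Rightarrow> 'a set set" where
  "cls E f = (Rel E)\<^sup>* `` {f}"
definition fam :: "'a set set \<Rightarrow> 'a set set \<Rightarrow> 'a set set set" where
  "fam E C = {blk E x f | x f. big E x \<and> f \<in> star E x \<and> f \<in> C}"

lemma hx_bij: "big E x \<Longrightarrow> bij_betw (hx E x) (star E x) (star E x \<times> (UNIV::nat set))"
proof -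
  assume "big E x"
  then obtain h where "bij_betw h (star E x) (star E x \<times> (UNIV::nat set))"
    using times_nat_bij unfolding big_def by blast
  then show ?thesis unfolding hx_def by (metis (no_types, lifting) someI_ex)
qed

lemma blk_self: "f \<in> star E x \<Longrightarrow> f \<in> blk E x f"
  by (simp add: blk_def)
lemma blk_sub: "blk E x f \<subseteq> star E x"
  by (auto simp: blk_def)
lemma blk_eq: "g \<in> blk E x f \<Longrightarrow> blk E x g = blk E x f"
  by (auto simp: blk_def)

lemma blk_inf: assumes "big E x" "f \<in> star E x" shows "infinite (blk E x f)"
proof -
  let ?h = "hx E x" let ?S = "star E x"
  have bij: "bij_betw ?h ?S (?S \<times> UNIV)" using hx_bij[OF assms(1)] .
  define r where "r = fst (?h f)"
  have "?h f \<in> ?S \<times> UNIV" using bij assms(2) unfolding bij_betw_def by blast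
  hence r: "r \<in> ?S" unfolding r_def by (simp add: mem_Times_iff)
  define k where "k n = inv_into ?S ?h (r, n)" for n
  have k: "k n \<in> ?S \<and> ?h (k n) = (r,n)" for n
  proof -
    have "(r,n) \<in> ?h ` ?S" using bij r unfolding bij_betw_def by simp
    thus ?thesis unfolding k_def using inv_into_into f_inv_into_f by metis
  qed
  have "inj k"
  proof (rule injI)
    fix m n assume "k m = k n"
    then have "(r,m) = (r,n)" using k[of m] k[of n] by metis
    thus "m = n" by simp
  qed
  moreover have "range k \<subseteq> blk E x f"
  proof
    fix g assume "g \<in> range k"
    then obtain n where "g = k n" by blast
    then show "g \<in> blk E x f" using k[of n] unfolding blk_def r_def by simp
  qed
  moreover have "infinite (range k)" using finite_imageD[of k UNIV] \<open>inj k\<close> by auto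
  ultimately show ?thesis using infinite_super by blast
qed

lemma blk_countable: assumes "big E x" shows "countable (blk E x f)"
proof -
  let ?h = "hx E x"
  have "inj_on ?h (star E x)" using hx_bij[OF assms] unfolding bij_betw_def by blast
  hence inj: "inj_on ?h (blk E x f)" by (rule inj_on_subset[OF _ blk_sub])
  have "?h ` blk E x f \<subseteq> {fst (?h f)} \<times> UNIV"
  proof
    fix p assume "p \<in> ?h ` blk E x f"
    then obtain g where "g \<in> blk E x f" "p = ?h g" by blast
    then have "fst p = fst (?h f)" unfolding blk_def by simp
    then show "p \<in> {fst (?h f)} \<times> UNIV" by (simp add: mem_Times_iff)
  qed
  moreover have "{fst (?h f)} \<times> (UNIV::nat set) = range (Pair (fst (?h f)))" by auto
  moreover have "countable (range (Pair (fst (?h f)) :: nat \<Rightarrow> _))" by (rule countable_image) simp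
  ultimately have "countable (?h ` blk E x f)" using countable_subset by metis
  thus ?thesis using inj countable_image_inj_on by blast
qed

lemma Rel_sym: assumes "(f,g) \<in> Rel E" shows "(g,f) \<in> Rel E"
proof -
  obtain x where x: "big E x" "f \<in> star E x" "g \<in> blk E x f" using assms unfolding Rel_def by blast
  have "blk E x g = blk E x f" using x(3) by (rule blk_eq)
  hence "f \<in> blk E x g" using blk_self[OF x(2)] by simp
  moreover have "g \<in> star E x" using x(3) blk_sub[of E x f] by (rule subsetD[rotated])
  ultimately show ?thesis using x(1) unfolding Rel_def by blast
qed

lemma Rel_image: 
  assumes "simple_edges E" shows "countable (Rel E `` {f})"
proof (cases "f \<in> E")
  case False
  then have "Rel E `` {f} = {}" unfolding Rel_def star_def by auto
  then show ?thesis by simp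
next
  case True
  then have fin: "finite f" using assms unfolding simple_edges_def by (metis card.infinite zero_neq_numeral)
  have "Rel E `` {f} \<subseteq> (\<Union>x\<in>{x\<in>f. big E x}. blk E x f)" unfolding Rel_def star_def by auto
  moreover have "countable (\<Union>x\<in>{x\<in>f. big E x}. blk E x f)"
    using fin by (intro countable_UN) (auto intro!: countable_finite blk_countable)
  ultimately show ?thesis using countable_subset by blast
qed

lemma rtrancl_countable:
  assumes "\<And>x. countable (R `` {x})" shows "countable (R\<^sup>* `` {a})"
proof -
  have pw: "countable ((R ^^ n) `` {a})" for n
  proof (induction n)
    case 0 then show ?case by simp
  next
    case (Suc n)
    have "(R ^^ Suc n) `` {a} = (\<Union>y\<in>(R ^^ n) `` {a}. R `` {y})" by auto
    then show ?case using Suc assms by (simp add: countable_UN)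
  qed
  have "R\<^sup>* `` {a} = (\<Union>n. (R ^^ n) `` {a})" by (auto simp add: rtrancl_power)
  then show ?thesis using pw by simp
qed

lemma cls_countable: "simple_edges E \<Longrightarrow> countable (cls E f)"
  unfolding cls_def by (rule rtrancl_countable) (rule Rel_image)

lemma cls_self: "f \<in> cls E f" unfolding cls_def by auto

lemma cls_eq: assumes "g \<in> cls E f" shows "cls E g = cls E f"
proof -
  have s: "sym (Rel E)" using Rel_sym by (auto simp: sym_def)
  have "(f,g) \<in> (Rel E)\<^sup>*" using assms unfolding cls_def by auto
  moreover have "(g,f) \<in> (Rel E)\<^sup>*" using calculation s by (meson sym_rtrancl symD)
  ultimately show ?thesis unfolding cls_def by (auto intro: rtrancl_trans)
qed

lemma blk_cls: assumes "big E x" "f \<in> star E x" shows "blk E x f \<subseteq> cls E f"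
  using assms unfolding cls_def Rel_def by auto

lemma fam_countable: assumes "simple_edges E" "countable C" shows "countable (fam E C)"
proof -
  let ?X = "{(x,f). big E x \<and> f \<in> star E x \<and> f \<in> C}"
  have 1: "fam E C = (\<lambda>(x,f). blk E x f) ` ?X"
    unfolding fam_def by (auto simp: image_def)
  have 2: "?X \<subseteq> (\<Union>f\<in>C\<inter>E. (\<lambda>x. (x,f)) ` f)"
  proof
    fix p assume "p \<in> ?X"
    then obtain x f where "p = (x,f)" "f \<in> star E x" "f \<in> C" by blast
    then show "p \<in> (\<Union>f\<in>C\<inter>E. (\<lambda>x. (x,f)) ` f)" unfolding star_def by blast
  qed
  have 3: "countable (\<Union>f\<in>C\<inter>E. (\<lambda>x. (x,f)) ` f)"
  proof (rule countable_UN)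
    show "countable (C \<inter> E)" using assms(2) by auto
    fix f assume "f \<in> C \<inter> E"
    then have "card f = 2" using assms(1) unfolding simple_edges_def by blast
    then have "finite f" by (metis card.infinite zero_neq_numeral)
    then show "countable ((\<lambda>x. (x,f)) ` f)" by (intro countable_finite finite_imageI)
  qed
  have "countable ?X" using countable_subset[OF 2 3] .
  then show ?thesis unfolding 1 by (rule countable_image)
qed

lemma good:
  fixes E :: "'a set set" and L :: "'a set \<Rightarrow> 'c set"
  assumes se: "simple_edges E" and L2: "\<forall>e\<in>E. card (L e) = 2"
  shows "\<exists>col. (\<forall>e\<in>E. (\<exists>x\<in>e. big E x) \<longrightarrow> col e \<in> L e) \<and>
               (\<forall>x c. big E x \<longrightarrow> star E x \<lesssim> {f\<in>star E x. col f \<noteq> c})"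
proof -
  define P where "P C col \<longleftrightarrow> (\<forall>e\<in>\<Union>(fam E C). col e \<in> L e) \<and> (\<forall>B\<in>fam E C. \<forall>c. infinite {f\<in>B. col f \<noteq> c})"
    for C and col :: "'a set \<Rightarrow> 'c"
  have exP: "\<exists>col. P C col" if "countable C" for C
    unfolding P_def
  proof (rule csl)
    show "countable (fam E C)" using fam_countable[OF se that] .
    fix B assume "B \<in> fam E C"
    then obtain x f where "B = blk E x f" "big E x" "f \<in> star E x" unfolding fam_def by blast
    then show "infinite B" using blk_inf by simp
  next
    fix e assume "e \<in> \<Union>(fam E C)"
    then obtain x f where "e \<in> blk E x f" unfolding fam_def by blast
    then have "e \<in> star E x" using blk_sub[of E x f] by (rule subsetD[rotated])
    then have "e \<in> E" unfolding star_def by simp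
    then show "card (L e) = 2" using L2 by auto
  qed
  define colC where "colC C = (SOME col. P C col)" for C
  have PC: "P (cls E f) (colC (cls E f))" for f
    using exP[OF cls_countable[OF se]] unfolding colC_def by (rule someI_ex)
  define col where "col f = colC (cls E f) f" for f
  have famI: "blk E x f \<in> fam E (cls E f)" if "big E x" "f \<in> star E x" for x f
    unfolding fam_def using that cls_self by blast
  have c1: "\<forall>e\<in>E. (\<exists>x\<in>e. big E x) \<longrightarrow> col e \<in> L e"
  proof (intro ballI impI)
    fix e assume e: "e \<in> E" "\<exists>x\<in>e. big E x"
    then obtain x where x: "big E x" "e \<in> star E x" unfolding star_def by auto
    have "e \<in> \<Union>(fam E (cls E e))" using famI[OF x] blk_self[OF x(2)] by blast
    then show "col e \<in> L e" using PC[of e] unfolding P_def col_def by auto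
  qed
  have blkinf: "infinite {g\<in>blk E x f. col g \<noteq> c}" if x: "big E x" "f \<in> star E x" for x f c
  proof -
    have cc: "\<forall>g\<in>blk E x f. cls E g = cls E f"
    proof
      fix g assume "g \<in> blk E x f"
      then have "g \<in> cls E f" using blk_cls[OF x] by (rule subsetD[rotated])
      then show "cls E g = cls E f" by (rule cls_eq)
    qed
    have "{g\<in>blk E x f. col g \<noteq> c} = {g\<in>blk E x f. colC (cls E f) g \<noteq> c}"
      unfolding col_def using cc by auto
    then show ?thesis using PC[of f] famI[OF x] unfolding P_def by auto
  qed
  have c2: "star E x \<lesssim> {f\<in>star E x. col f \<noteq> c}" if x: "big E x" for x c
  proof -
    define T where "T B = {g\<in>B. col g \<noteq> c}" for B
    have exi: "\<exists>\<iota>. inj_on \<iota> (blk E x f) \<and> \<iota> ` blk E x f \<subseteq> T (blk E x f)" if f: "f \<in> star E x" for f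
    proof -
      have "blk E x f \<lesssim> (UNIV::nat set)" using blk_countable[OF x]
        by (simp add: countable_def lepoll_def)
      also have "(UNIV::nat set) \<lesssim> T (blk E x f)" using blkinf[OF x f] infinite_le_lepoll unfolding T_def by blast
      finally show ?thesis unfolding lepoll_def by blast
    qed
    define \<iota> where "\<iota> B = (SOME \<iota>. inj_on \<iota> B \<and> \<iota> ` B \<subseteq> T B)" for B
    have \<iota>: "inj_on (\<iota> (blk E x f)) (blk E x f) \<and> \<iota> (blk E x f) ` blk E x f \<subseteq> T (blk E x f)" if "f \<in> star E x" for f
      using exi[OF that] unfolding \<iota>_def by (rule someI_ex)
    define j where "j g = \<iota> (blk E x g) g" for g
    have jT: "j g \<in> blk E x g \<and> col (j g) \<noteq> c" if "g \<in> star E x" for g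
      using \<iota>[OF that] blk_self[OF that] unfolding j_def T_def by blast
    have "inj_on j (star E x)"
    proof (rule inj_onI)
      fix g1 g2 assume g: "g1 \<in> star E x" "g2 \<in> star E x" "j g1 = j g2"
      have "blk E x g1 = blk E x (j g1)" using jT[OF g(1)] blk_eq by metis
      also have "\<dots> = blk E x g2" using jT[OF g(2)] blk_eq g(3) by metis
      finally have eq: "blk E x g1 = blk E x g2" .
      have "\<iota> (blk E x g1) g1 = \<iota> (blk E x g1) g2" using g(3) eq unfolding j_def by simp
      moreover have "g2 \<in> blk E x g1" using eq blk_self[OF g(2)] by simp
      ultimately show "g1 = g2" using \<iota>[OF g(1)] blk_self[OF g(1)] by (meson inj_onD)
    qed
    moreover have "j ` star E x \<subseteq> {f\<in>star E x. col f \<noteq> c}"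
    proof
      fix y assume "y \<in> j ` star E x"
      then obtain g where g: "g \<in> star E x" "y = j g" by blast
      have "j g \<in> star E x" using jT[OF g(1)] blk_sub[of E x g] by blast
      then show "y \<in> {f\<in>star E x. col f \<noteq> c}" using jT[OF g(1)] g(2) by simp
    qed
    ultimately show ?thesis unfolding lepoll_def by blast
  qed
  show ?thesis using c1 c2 by blast
qed



definition okc :: "'v set \<Rightarrow> ('v \<Rightarrow> 'v \<Rightarrow> bool) \<Rightarrow> ('v \<Rightarrow> 'c) \<Rightarrow> 'v \<Rightarrow> bool" where
  "okc V adj c e \<longleftrightarrow> card {y \<in> nbhd V adj e. c y = c e} \<le> card {y \<in> nbhd V adj e. c y \<noteq> c e}"

definition comb :: "'v set \<Rightarrow> ('v \<Rightarrow> 'c) \<Rightarrow> ('v \<Rightarrow> 'c) \<Rightarrow> 'v \<Rightarrow> 'c" where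
  "comb Vs c0 g f = (if f \<in> Vs then g f else c0 f)"

lemma fin_maj:
  fixes V Vs :: "'v set" and adj and c0 :: "'v \<Rightarrow> 'c" and L :: "'v \<Rightarrow> 'c set"
  assumes sym: "\<And>x y. adj x y \<Longrightarrow> adj y x" and irr: "\<And>x. \<not> adj x x"
    and Vs: "Vs \<subseteq> V" and F: "finite F" "F \<subseteq> Vs"
    and finN: "\<And>e. e \<in> Vs \<Longrightarrow> finite (nbhd V adj e)"
    and L2: "\<And>e. e \<in> Vs \<Longrightarrow> card (L e) = 2"
  shows "\<exists>g\<in>Pi\<^sub>E Vs L. \<forall>e\<in>F. okc V adj (comb Vs c0 g) e"
proof -
  define N where "N e = nbhd V adj e" for e
  define P where "P = (\<Union>e\<in>F. (\<lambda>f. {e,f}) ` N e)"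
  have finP: "finite P" unfolding P_def using F finN N_def by auto
  define mono where "mono c p \<longleftrightarrow> (\<forall>a\<in>p. \<forall>b\<in>p. c a = (c b :: 'c))" for c :: "'v \<Rightarrow> 'c" and p
  define \<Phi> where "\<Phi> g = card {p\<in>P. mono (comb Vs c0 g) p}" for g
  have ne: "Pi\<^sub>E Vs L \<noteq> {}"
  proof -
    have "\<forall>e\<in>Vs. L e \<noteq> {}" using L2 by fastforce
    thus ?thesis by (simp add: PiE_eq_empty_iff)
  qed
  then obtain g0 where "g0 \<in> Pi\<^sub>E Vs L" by blast
  then obtain g where g: "g \<in> Pi\<^sub>E Vs L" and gmin: "\<And>g'. g' \<in> Pi\<^sub>E Vs L \<Longrightarrow> \<Phi> g \<le> \<Phi> g'"
    using ex_has_least_nat[of "\<lambda>g. g \<in> Pi\<^sub>E Vs L" g0 \<Phi>] by blast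
  have "okc V adj (comb Vs c0 g) e0" if e0: "e0 \<in> F" for e0
  proof (rule ccontr)
    assume nok: "\<not> okc V adj (comb Vs c0 g) e0"
    let ?c = "comb Vs c0 g"
    have e0V: "e0 \<in> Vs" using e0 F by auto
    define a where "a = g e0"
    have "a \<in> L e0" using g e0V unfolding a_def by auto
    obtain b where b: "b \<in> L e0" "b \<noteq> a" using card2_other[OF L2[OF e0V]] by blast
    define g' where "g' = g(e0 := b)"
    have g': "g' \<in> Pi\<^sub>E Vs L" using g b e0V unfolding g'_def by (auto simp: PiE_def extensional_def)
    let ?c' = "comb Vs c0 g'"
    have cc': "?c' = ?c(e0 := b)" using e0V unfolding g'_def comb_def by (auto simp: fun_eq_iff)
    have ce0: "?c e0 = a" using e0V unfolding comb_def a_def by simp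
    have e0N: "e0 \<notin> N e0" unfolding N_def nbhd_def using irr by auto
    define P0 where "P0 = {p\<in>P. e0 \<notin> p}"
    define P1 where "P1 = {p\<in>P. e0 \<in> p}"
    have P1: "P1 = (\<lambda>f. {e0,f}) ` N e0"
    proof
      show "P1 \<subseteq> (\<lambda>f. {e0,f}) ` N e0"
      proof
        fix p assume "p \<in> P1"
        then obtain e f where ef: "e \<in> F" "f \<in> N e" "p = {e,f}" "e0 \<in> p" unfolding P1_def P_def by blast
        show "p \<in> (\<lambda>f. {e0,f}) ` N e0"
        proof (cases "e0 = e")
          case True then show ?thesis using ef by auto
        next
          case False
          then have "e0 = f" using ef by auto
          moreover have "e \<in> N f" using ef(1,2) F Vs sym unfolding N_def nbhd_def by auto
          ultimately show ?thesis using ef(3) by (auto simp: insert_commute)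
        qed
      qed
      show "(\<lambda>f. {e0,f}) ` N e0 \<subseteq> P1" unfolding P1_def P_def using e0 by auto
    qed
    have injP: "inj_on (\<lambda>f. {e0,f}) (N e0)"
      using e0N by (auto simp: inj_on_def doubleton_eq_iff)
    have monoP: "mono c {e0,f} \<longleftrightarrow> c f = c e0" for c f unfolding mono_def by auto
    have cnt: "card {p\<in>P1. mono c p} = card {f\<in>N e0. c f = c e0}" for c
    proof -
      have "{p\<in>P1. mono c p} = (\<lambda>f. {e0,f}) ` {f\<in>N e0. c f = c e0}" unfolding P1 using monoP by auto
      moreover have "inj_on (\<lambda>f. {e0,f}) {f\<in>N e0. c f = c e0}" using injP by (rule inj_on_subset) auto
      ultimately show ?thesis by (simp add: card_image)
    qed
    have P0eq: "{p\<in>P0. mono ?c' p} = {p\<in>P0. mono ?c p}"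
      unfolding P0_def mono_def cc' by auto
    have split: "\<Phi> h = card {p\<in>P0. mono (comb Vs c0 h) p} + card {p\<in>P1. mono (comb Vs c0 h) p}" for h
    proof -
      have "{p\<in>P. mono (comb Vs c0 h) p} = {p\<in>P0. mono (comb Vs c0 h) p} \<union> {p\<in>P1. mono (comb Vs c0 h) p}"
        unfolding P0_def P1_def by auto
      moreover have "finite {p\<in>P0. mono (comb Vs c0 h) p}" "finite {p\<in>P1. mono (comb Vs c0 h) p}"
        using finP unfolding P0_def P1_def by auto
      moreover have "{p\<in>P0. mono (comb Vs c0 h) p} \<inter> {p\<in>P1. mono (comb Vs c0 h) p} = {}"
        unfolding P0_def P1_def by auto
      ultimately show ?thesis unfolding \<Phi>_def by (simp add: card_Un_disjoint)
    qed
    have finNe0: "finite (N e0)" using finN[OF e0V] N_def by simp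
    have "card {f\<in>N e0. ?c' f = ?c' e0} = card {f\<in>N e0. ?c f = b}"
      using e0N by (intro arg_cong[where f=card]) (auto simp: cc')
    also have "\<dots> \<le> card {f\<in>N e0. ?c f \<noteq> a}"
      using b finNe0 by (intro card_mono) auto
    also have "\<dots> < card {f\<in>N e0. ?c f = a}"
      using nok ce0 unfolding okc_def N_def by auto
    finally have "card {p\<in>P1. mono ?c' p} < card {p\<in>P1. mono ?c p}" using cnt ce0 by simp
    hence "\<Phi> g' < \<Phi> g" using split[of g] split[of g'] P0eq by simp
    thus False using gmin[OF g'] by simp
  qed
  then show ?thesis using g by blast
qed



lemma closed_dep:
  fixes A :: "'i \<Rightarrow> 'c set"
  assumes D: "finite D" "D \<subseteq> I"
    and dep: "\<And>g g'. g \<in> Pi\<^sub>E I A \<Longrightarrow> g' \<in> Pi\<^sub>E I A \<Longrightarrow> (\<forall>d\<in>D. g d = g' d) \<Longrightarrow> Q g \<Longrightarrow> Q g'"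
  shows "closedin (product_topology (\<lambda>i. discrete_topology (A i)) I) {g \<in> Pi\<^sub>E I A. Q g}"
proof -
  let ?T = "product_topology (\<lambda>i. discrete_topology (A i)) I"
  have top: "topspace ?T = Pi\<^sub>E I A" by simp
  have "openin ?T (topspace ?T - {g \<in> Pi\<^sub>E I A. Q g})"
  proof (subst openin_subopen, intro ballI)
    fix g assume g: "g \<in> topspace ?T - {g \<in> Pi\<^sub>E I A. Q g}"
    then have gP: "g \<in> Pi\<^sub>E I A" and nQ: "\<not> Q g" using top by auto
    define U where "U = (\<Inter>d\<in>D. {g' \<in> topspace ?T. g' d \<in> {g d}}) \<inter> topspace ?T"
    have "openin ?T U" unfolding U_def
    proof (rule openin_INT[OF D(1)])
      fix d assume d: "d \<in> D"
      then have dI: "d \<in> I" using D by auto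
      have "continuous_map ?T (discrete_topology (A d)) (\<lambda>x. x d)"
        by (rule continuous_map_product_projection[OF dI])
      moreover have "openin (discrete_topology (A d)) {g d}" using gP dI by auto
      ultimately show "openin ?T {g' \<in> topspace ?T. g' d \<in> {g d}}"
        by (rule openin_continuous_map_preimage)
    qed
    moreover have "g \<in> U" using gP top unfolding U_def by auto
    moreover have "U \<subseteq> topspace ?T - {g \<in> Pi\<^sub>E I A. Q g}"
    proof
      fix g' assume g': "g' \<in> U"
      then have g'P: "g' \<in> Pi\<^sub>E I A" and eq: "\<forall>d\<in>D. g' d = g d" unfolding U_def using top by auto
      have "\<not> Q g'" using dep[OF g'P gP eq] nQ by blast
      then show "g' \<in> topspace ?T - {g \<in> Pi\<^sub>E I A. Q g}" using g'P top by auto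
    qed
    ultimately show "\<exists>U. openin ?T U \<and> g \<in> U \<and> U \<subseteq> topspace ?T - {g \<in> Pi\<^sub>E I A. Q g}" by blast
  qed
  moreover have "{g \<in> Pi\<^sub>E I A. Q g} \<subseteq> topspace ?T" by auto
  ultimately show ?thesis unfolding closedin_def by blast
qed

lemma compact_maj:
  fixes V Vs :: "'v set" and adj and c0 :: "'v \<Rightarrow> 'c" and L :: "'v \<Rightarrow> 'c set"
  assumes sym: "\<And>x y. adj x y \<Longrightarrow> adj y x" and irr: "\<And>x. \<not> adj x x"
    and Vs: "Vs \<subseteq> V"
    and finN: "\<And>e. e \<in> Vs \<Longrightarrow> finite (nbhd V adj e)"
    and L2: "\<And>e. e \<in> Vs \<Longrightarrow> card (L e) = 2"
  shows "\<exists>g\<in>Pi\<^sub>E Vs L. \<forall>e\<in>Vs. okc V adj (comb Vs c0 g) e"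
proof -
  let ?T = "product_topology (\<lambda>i. discrete_topology (L i)) Vs"
  have top: "topspace ?T = Pi\<^sub>E Vs L" by simp
  have finL: "finite (L e)" if "e \<in> Vs" for e using L2[OF that] by (metis card.infinite zero_neq_numeral)
  have cpt: "compact_space ?T"
    unfolding compact_space_product_topology using finL by (auto simp: compact_space_discrete_topology)
  define K where "K e = {g \<in> Pi\<^sub>E Vs L. okc V adj (comb Vs c0 g) e}" for e
  have clK: "closedin ?T (K e)" if e: "e \<in> Vs" for e
  proof -
    define D where "D = insert e (nbhd V adj e) \<inter> Vs"
    have "finite D" using finN[OF e] unfolding D_def by auto
    moreover have "D \<subseteq> Vs" unfolding D_def by auto
    moreover have "okc V adj (comb Vs c0 g') e"
      if "g \<in> Pi\<^sub>E Vs L" "g' \<in> Pi\<^sub>E Vs L" "\<forall>d\<in>D. g d = g' d" "okc V adj (comb Vs c0 g) e" for g g'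
    proof -
      have "\<forall>y\<in>insert e (nbhd V adj e). comb Vs c0 g y = comb Vs c0 g' y"
        using that(3) unfolding D_def comb_def by auto
      then have "{y \<in> nbhd V adj e. comb Vs c0 g' y = comb Vs c0 g' e} = {y \<in> nbhd V adj e. comb Vs c0 g y = comb Vs c0 g e}"
           "{y \<in> nbhd V adj e. comb Vs c0 g' y \<noteq> comb Vs c0 g' e} = {y \<in> nbhd V adj e. comb Vs c0 g y \<noteq> comb Vs c0 g e}"
        by auto
      then show ?thesis using that(4) unfolding okc_def by simp
    qed
    ultimately show ?thesis unfolding K_def by (rule closed_dep)
  qed
  define U where "U = insert (topspace ?T) (K ` Vs)"
  have "\<Inter>U \<noteq> {}"
  proof (rule cpt[unfolded compact_space_fip, rule_format], intro conjI allI impI ballI)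
    fix C assume "C \<in> U" then show "closedin ?T C" unfolding U_def using clK closedin_topspace[of ?T] top by auto
  next
    fix \<F> assume F: "finite \<F> \<and> \<F> \<subseteq> U"
    then have "\<F> - {topspace ?T} \<subseteq> K ` Vs" unfolding U_def by auto
    moreover have "finite (\<F> - {topspace ?T})" using F by auto
    ultimately obtain F where F': "F \<subseteq> Vs" "finite F" "\<F> - {topspace ?T} = K ` F"
      by (meson finite_subset_image)
    have "\<exists>g\<in>Pi\<^sub>E Vs L. \<forall>e\<in>F. okc V adj (comb Vs c0 g) e"
    proof (rule fin_maj)
      show "\<And>x y. adj x y \<Longrightarrow> adj y x" using sym by blast
      show "\<And>x. \<not> adj x x" using irr by blast
    qed (use Vs F' finN L2 in auto)
    then obtain g where g: "g \<in> Pi\<^sub>E Vs L" "\<forall>e\<in>F. okc V adj (comb Vs c0 g) e" by blast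
    have "g \<in> \<Inter>\<F>"
    proof
      fix C assume "C \<in> \<F>"
      show "g \<in> C"
      proof (cases "C = topspace ?T")
        case True then show ?thesis using g top by simp
      next
        case False
        then have "C \<in> K ` F" using \<open>C \<in> \<F>\<close> F'(3) by blast
        then show ?thesis using g unfolding K_def by auto
      qed
    qed
    then show "\<Inter>\<F> \<noteq> {}" by blast
  qed
  then obtain g where "g \<in> \<Inter>U" by blast
  then have "g \<in> Pi\<^sub>E Vs L" "\<forall>e\<in>Vs. g \<in> K e" unfolding U_def using top by auto
  then show ?thesis unfolding K_def by blast
qed



theorem mainTheorem4:
  fixes E :: "'a set set" and L :: "'a set \<Rightarrow> 'c set"
  assumes "simple_edges E"
    and "infinite E"
    and "\<forall>e\<in>E. card (L e) = 2"
  shows "\<exists>c. majority_list_coloring E (line_adj E) L c"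
proof -
  note se = assms(1) and L2 = assms(3)
  obtain col1 :: "'a set \<Rightarrow> 'c" where
    c1: "\<forall>e\<in>E. (\<exists>x\<in>e. big E x) \<longrightarrow> col1 e \<in> L e" and
    c2: "\<forall>x c. big E x \<longrightarrow> star E x \<lesssim> {f\<in>star E x. col1 f \<noteq> c}"
    using good[OF se L2] by blast
  define Es where "Es = {e \<in> E. \<forall>x\<in>e. \<not> big E x}"
  define N where "N e = nbhd E (line_adj E) e" for e
  have sym: "line_adj E x y \<Longrightarrow> line_adj E y x" for x y unfolding line_adj_def by auto
  have irr: "\<not> line_adj E x x" for x unfolding line_adj_def by auto
  have Nsub: "N e \<subseteq> (\<Union>x\<in>e. star E x)" for e
    unfolding N_def nbhd_def line_adj_def star_def by auto
  have fine: "finite e" if "e \<in> E" for e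
    using se that unfolding simple_edges_def by (metis card.infinite zero_neq_numeral)
  have finN: "finite (nbhd E (line_adj E) e)" if e: "e \<in> Es" for e
  proof -
    have "finite (\<Union>x\<in>e. star E x)"
      using e fine unfolding Es_def big_def by auto
    then show ?thesis using Nsub[of e] unfolding N_def by (rule finite_subset[rotated])
  qed
  obtain g where g: "g \<in> Pi\<^sub>E Es L" and gok: "\<forall>e\<in>Es. okc E (line_adj E) (comb Es col1 g) e"
  proof -
    have "\<exists>g\<in>Pi\<^sub>E Es L. \<forall>e\<in>Es. okc E (line_adj E) (comb Es col1 g) e"
    proof (rule compact_maj)
      show "\<And>x y. line_adj E x y \<Longrightarrow> line_adj E y x" using sym by blast
      show "\<And>x. \<not> line_adj E x x" using irr by blast
    qed (use finN L2 in \<open>auto simp: Es_def\<close>)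
    then show ?thesis using that by blast
  qed
  define c where "c = comb Es col1 g"
  have cL: "\<forall>x\<in>E. c x \<in> L x"
  proof
    fix x assume x: "x \<in> E"
    show "c x \<in> L x"
    proof (cases "x \<in> Es")
      case True then show ?thesis using g unfolding c_def comb_def by auto
    next
      case False
      then have "\<exists>y\<in>x. big E y" using x unfolding Es_def by auto
      then show ?thesis using c1 x False unfolding c_def comb_def by auto
    qed
  qed
  have maj: "card_leq {y \<in> nbhd E (line_adj E) e. c y = c e} {y \<in> nbhd E (line_adj E) e. c y \<noteq> c e}"
    if e: "e \<in> E" for e
  proof (cases "e \<in> Es")
    case True
    have "card {y \<in> nbhd E (line_adj E) e. c y = c e} \<le> card {y \<in> nbhd E (line_adj E) e. c y \<noteq> c e}"
      using gok True unfolding c_def okc_def by auto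
    moreover have "finite {y \<in> nbhd E (line_adj E) e. c y = c e}" "finite {y \<in> nbhd E (line_adj E) e. c y \<noteq> c e}"
      using finN[OF True] by auto
    ultimately show ?thesis unfolding card_leq_iff_lepoll using lepoll_iff_card_le by blast
  next
    case False
    then obtain x0 where x0: "x0 \<in> e" "big E x0" using e unfolding Es_def by auto
    have "card e = 2" using se e unfolding simple_edges_def by auto
    then obtain z0 where ez0: "e = {x0, z0}" using x0(1) by (metis card_2_iff insert_commute insertE singletonD)
    obtain x z where xz: "e = {x, z}" "big E x" "star E z \<lesssim> star E x"
    proof (cases "star E z0 \<lesssim> star E x0")
      case True then show ?thesis using that ez0 x0 by blast
    next
      case False
      then have le: "star E x0 \<lesssim> star E z0" using lepoll_total by blast
      then have "big E z0" using x0(2) unfolding big_def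
        using infinite_le_lepoll lepoll_trans by blast
      then show ?thesis using that[of z0 x0] ez0 le by (auto simp: insert_commute)
    qed
    have ce: "c e = col1 e" using False unfolding c_def comb_def by simp
    have "{y \<in> nbhd E (line_adj E) e. c y = c e} \<lesssim> star E x \<union> star E z"
      using Nsub[of e] xz(1) unfolding N_def by (intro subset_imp_lepoll) auto
    also have "\<dots> \<lesssim> star E x"
      using Un_lepoll_infinite xz(2,3) unfolding big_def by blast
    also have "\<dots> \<lesssim> {f\<in>star E x. col1 f \<noteq> col1 e}" using c2 xz(2) by blast
    also have "\<dots> \<lesssim> {y \<in> nbhd E (line_adj E) e. c y \<noteq> c e}"
    proof (rule subset_imp_lepoll, rule subsetI)
      fix f assume f: "f \<in> {f\<in>star E x. col1 f \<noteq> col1 e}"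
      then have fE: "f \<in> E" "x \<in> f" "col1 f \<noteq> col1 e" unfolding star_def by auto
      have "f \<notin> Es" using fE xz(2) unfolding Es_def by auto
      then have cf: "c f = col1 f" unfolding c_def comb_def by simp
      have "f \<noteq> e" using fE(3) by auto
      moreover have "x \<in> e" using xz(1) by auto
      ultimately have "line_adj E e f" using e fE unfolding line_adj_def by auto
      then show "f \<in> {y \<in> nbhd E (line_adj E) e. c y \<noteq> c e}"
        using fE cf ce unfolding nbhd_def by auto
    qed
    finally show ?thesis unfolding card_leq_iff_lepoll .
  qed
  show ?thesis unfolding majority_list_coloring_def using cL maj by blast
qed


end
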